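(* For every $n\ge 2$, the diameter of the origami flip graph ${\rm OFG}(M_{2,n})$ is $\lceil n^2/2\rceil$.
   Context: The $2\times n$ Miura-ori $M_{2,n}$ has faces $\alpha_{i,j}$ ($i\in\{1,2\}$, $j\in\{1,\dots,n\}$), interior vertices $x_1,\dots,x_{n-1}$, and creases $e_0$ and $e_{3k-1},e_{3k},e_{3k+1}$ ($k=1,\dots,n-1$). At $x_k$ the creases are left $e_{3k-3}$, top $e_{3k-1}$, right $e_{3k}$, bottom $e_{3k+1}$ (angles adjacent to the left crease obtuse, others acute). Face $\alpha_{1,j}$ is bordered by those of $e_{3j-4}$ (iff $j\ge2$), $e_{3j-3}$, $e_{3j-1}$ (iff $j\le n-1$); $\alpha_{2,j}$ by those of $e_{3j-2}$ (iff $j\ge2$), $e_{3j-3}$, $e_{3j+1}$ (iff $j\le n-1$). An MV assignment $\mu$ maps creases to $\{1,-1\}$; it is locally valid if for each $k$ exactly one of $\mu(e_{3k-1}),\mu(e_{3k}),\mu(e_{3k+1})$ differs from $\mu(e_{3k-3})$. The face flip $\mu_\alpha$ negates $\mu$ on the creases bordering $\alpha$; $\alpha$ is flippable under $\mu$ if $\mu,\mu_\alpha$ are both locally valid. ${\rm OFG}(M_{2,n})$ is the graph whose vertices are the locally valid MV assignments, with $\mu\sim\mu_\alpha$ for each flippable $\alpha$. *)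

theory Defs
  imports Complex_Main "HOL-Library.Extended_Nat"
begin

text \<open>Miura-ori M_{2,n}. Creases are indexed by natural numbers: crease e_i has index i.
  The creases are e_0 and e_{3k-1}, e_{3k}, e_{3k+1} for k = 1..n-1.\<close>

definition creases :: "nat \<Rightarrow> nat set" where
  "creases n = {0} \<union> (\<Union>k\<in>{1..n-1}. {3*k-1, 3*k, 3*k+1})"

definition faces :: "nat \<Rightarrow> (nat \<times> nat) set" where
  "faces n = {1,2} \<times> {1..n}"

definition border :: "nat \<Rightarrow> nat \<times> nat \<Rightarrow> nat set" where
  "border n f = (case f of (i, j) \<Rightarrow>
     if i = 1 then (if j \<ge> 2 then {3*j-4} else {}) \<union> {3*j-3} \<union> (if j \<le> n-1 then {3*j-1} else {})
     else (if j \<ge> 2 then {3*j-2} else {}) \<union> {3*j-3} \<union> (if j \<le> n-1 then {3*j+1} else {}))"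

text \<open>MV assignments: maps creases to {1,-1}; represented as functions nat => int
  which are 0 outside the crease set (so that assignments are determined by their
  values on creases).\<close>
definition mv_assignment :: "nat \<Rightarrow> (nat \<Rightarrow> int) \<Rightarrow> bool" where
  "mv_assignment n \<mu> \<longleftrightarrow> (\<forall>e\<in>creases n. \<mu> e \<in> {1, -1}) \<and> (\<forall>e. e \<notin> creases n \<longrightarrow> \<mu> e = 0)"

text \<open>Local validity: at each interior vertex x_k exactly one of the top, right, bottom
  creases differs from the left crease.\<close>
definition locally_valid :: "nat \<Rightarrow> (nat \<Rightarrow> int) \<Rightarrow> bool" where
  "locally_valid n \<mu> \<longleftrightarrow>
     (\<forall>k\<in>{1..n-1}. card {e \<in> {3*k-1, 3*k, 3*k+1}. \<mu> e \<noteq> \<mu> (3*k-3)} = 1)"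

definition face_flip :: "nat \<Rightarrow> (nat \<Rightarrow> int) \<Rightarrow> nat \<times> nat \<Rightarrow> (nat \<Rightarrow> int)" where
  "face_flip n \<mu> f = (\<lambda>e. if e \<in> border n f then - \<mu> e else \<mu> e)"

definition flippable :: "nat \<Rightarrow> (nat \<Rightarrow> int) \<Rightarrow> nat \<times> nat \<Rightarrow> bool" where
  "flippable n \<mu> f \<longleftrightarrow> locally_valid n \<mu> \<and> locally_valid n (face_flip n \<mu> f)"

definition ofg_vertices :: "nat \<Rightarrow> (nat \<Rightarrow> int) set" where
  "ofg_vertices n = {\<mu>. mv_assignment n \<mu> \<and> locally_valid n \<mu>}"

definition ofg_edges :: "nat \<Rightarrow> ((nat \<Rightarrow> int) \<times> (nat \<Rightarrow> int)) set" where
  "ofg_edges n = {(\<mu>, \<nu>). \<mu> \<in> ofg_vertices n \<and>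
      (\<exists>f\<in>faces n. flippable n \<mu> f \<and> \<nu> = face_flip n \<mu> f)}"

text \<open>Graph distance (infinite if no path) and diameter.\<close>
definition ofg_dist :: "nat \<Rightarrow> (nat \<Rightarrow> int) \<Rightarrow> (nat \<Rightarrow> int) \<Rightarrow> enat" where
  "ofg_dist n \<mu> \<nu> = (INF k\<in>{k. (\<mu>, \<nu>) \<in> (ofg_edges n) ^^ k}. enat k)"

definition ofg_diameter :: "nat \<Rightarrow> enat" where
  "ofg_diameter n = (SUP \<mu>\<in>ofg_vertices n. SUP \<nu>\<in>ofg_vertices n. ofg_dist n \<mu> \<nu>)"

end

theory Submission
  imports Defs
begin
definition sg :: "int \<Rightarrow> int" where "sg x = (if even x then 1 else -1)"

definition lip :: "nat \<Rightarrow> (nat \<Rightarrow> int) \<Rightarrow> bool" where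
  "lip n g \<longleftrightarrow> (\<forall>k. 1 \<le> k \<and> k < n \<longrightarrow> \<bar>g k - g (k-1)\<bar> \<le> 1)"

definition tfl :: "int \<Rightarrow> int \<Rightarrow> int \<Rightarrow> bool" where
  "tfl a b k \<longleftrightarrow> b \<noteq> a \<and> odd (min a b + k)"
definition bfl :: "int \<Rightarrow> int \<Rightarrow> int \<Rightarrow> bool" where
  "bfl a b k \<longleftrightarrow> b \<noteq> a \<and> even (min a b + k)"

definition enc :: "nat \<Rightarrow> (nat \<Rightarrow> int) \<Rightarrow> nat \<Rightarrow> int" where
  "enc n g e = (if e \<in> creases n then
     (if e mod 3 = 0 then sg (g (e div 3) + int (e div 3))
      else if e mod 3 = 2 then sg (g ((e+1) div 3 - 1) + int ((e+1) div 3) - 1)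
              * (if tfl (g ((e+1) div 3 - 1)) (g ((e+1) div 3)) (int ((e+1) div 3)) then -1 else 1)
      else sg (g (e div 3 - 1) + int (e div 3) - 1)
              * (if bfl (g (e div 3 - 1)) (g (e div 3)) (int (e div 3)) then -1 else 1))
   else 0)"

lemma creases_iff:
  assumes "n \<ge> 1"
  shows "e \<in> creases n \<longleftrightarrow> (\<exists>j<n. e = 3*j) \<or> (\<exists>k. 1 \<le> k \<and> k < n \<and> (e = 3*k-1 \<or> e = 3*k+1))"
proof
  assume "e \<in> creases n"
  then consider "e = 0" | k where "k \<in> {1..n-1}" "e \<in> {3*k-1, 3*k, 3*k+1}"
    unfolding creases_def by blast
  then show "(\<exists>j<n. e = 3*j) \<or> (\<exists>k. 1 \<le> k \<and> k < n \<and> (e = 3*k-1 \<or> e = 3*k+1))"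
  proof cases
    case 1 then show ?thesis using assms by auto
  next
    case 2
    then have "1 \<le> k" "k < n" by auto
    then show ?thesis using 2(2) by blast
  qed
next
  assume "(\<exists>j<n. e = 3*j) \<or> (\<exists>k. 1 \<le> k \<and> k < n \<and> (e = 3*k-1 \<or> e = 3*k+1))"
  then consider j where "j < n" "e = 3*j" | k where "1 \<le> k" "k < n" "e = 3*k-1 \<or> e = 3*k+1"
    by blast
  then show "e \<in> creases n"
  proof cases
    case 1
    show ?thesis
    proof (cases "j = 0")
      case True then show ?thesis using 1 unfolding creases_def by simp
    next
      case False
      then have "j \<in> {1..n-1}" using 1 by auto
      then show ?thesis using 1 unfolding creases_def by blast
    qed
  next
    case 2
    then have "k \<in> {1..n-1}" by auto
    then show ?thesis using 2 unfolding creases_def by blast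
  qed
qed

lemma enc_out: "e \<notin> creases n \<Longrightarrow> enc n g e = 0"
  by (simp add: enc_def)

lemma enc_h: "j < n \<Longrightarrow> enc n g (3*j) = sg (g j + int j)"
  using creases_iff[of n "3*j"] by (simp add: enc_def)

lemma enc_t: "1 \<le> k \<Longrightarrow> k < n \<Longrightarrow>
   enc n g (3*k-1) = sg (g (k-1) + int k - 1) * (if tfl (g (k-1)) (g k) (int k) then -1 else 1)"
proof -
  assume a: "1 \<le> k" "k < n"
  have c: "3*k-1 \<in> creases n" using creases_iff[of n "3*k-1"] a by auto
  obtain k' where k': "k = Suc k'" using a by (cases k) auto
  have e: "3*k-1 = 3*k'+2" using k' by simp
  have m: "(3*k-1) mod 3 = 2" unfolding e by presburger
  have d: "(3*k-1+1) div 3 = k" unfolding e k' by presburger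
  show ?thesis unfolding enc_def if_P[OF c] by (simp only: m d) simp
qed

lemma enc_b: "1 \<le> k \<Longrightarrow> k < n \<Longrightarrow>
   enc n g (3*k+1) = sg (g (k-1) + int k - 1) * (if bfl (g (k-1)) (g k) (int k) then -1 else 1)"
proof -
  assume a: "1 \<le> k" "k < n"
  have c: "3*k+1 \<in> creases n" using creases_iff[of n "3*k+1"] a by auto
  have m: "(3*k+1) mod 3 = 1" by presburger
  have d: "(3*k+1) div 3 = k" by presburger
  show ?thesis unfolding enc_def if_P[OF c] by (simp only: m d) simp
qed

lemma sg_pm: "sg x = 1 \<or> sg x = -1" by (simp add: sg_def)
lemma sg_eq: "sg x = sg y \<longleftrightarrow> (even x \<longleftrightarrow> even y)" by (simp add: sg_def)
lemma sg_add2: "sg (x + 2*c) = sg x" by (simp add: sg_def)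

lemma enc_range: "e \<in> creases n \<Longrightarrow> enc n g e = 1 \<or> enc n g e = -1"
  by (simp add: enc_def sg_def)

lemma enc_cong: assumes "\<forall>j<n. g j = h j" "n \<ge> 1" shows "enc n g = enc n h"
proof
  fix e
  show "enc n g e = enc n h e"
  proof (cases "e \<in> creases n")
    case False then show ?thesis by (simp add: enc_out)
  next
    case True
    have n1: "n \<ge> 1" using assms by simp
    from True creases_iff[OF n1] consider (h) j where "j<n" "e = 3*j"
      | (t) k where "1 \<le> k" "k < n" "e = 3*k-1" | (b) k where "1 \<le> k" "k < n" "e = 3*k+1" by blast
    then show ?thesis
    proof cases
      case h then show ?thesis using assms by (simp add: enc_h)
    next
      case t then show ?thesis using assms by (simp only: enc_t)
    next
      case b then show ?thesis using assms by (simp only: enc_b)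
    qed
  qed
qed

lemma enc_shift: "enc n (\<lambda>j. g j + 2*c) = enc n g"
proof
  fix e
  have mn: "min (a + 2*c) (b + 2*c) = min a b + 2*c" for a b by (simp add: min_def)
  have ev: "even (x + 2*c + k) \<longleftrightarrow> even (x + k)" for x k :: int by presburger
  have t: "tfl (a + 2*c) (b + 2*c) k = tfl a b k" for a b k
    unfolding tfl_def mn ev by simp
  have b: "bfl (a + 2*c) (b + 2*c) k = bfl a b k" for a b k
    unfolding bfl_def mn ev by simp
  have s: "sg (a + 2*c + k) = sg (a + k)" "sg (a + 2*c + k - 1) = sg (a + k - 1)" for a k
    unfolding sg_eq by presburger+
  show "enc n (\<lambda>j. g j + 2*c) e = enc n g e"
    unfolding enc_def by (simp only: t b s)
qed

definition ex1 :: "bool \<Rightarrow> bool \<Rightarrow> bool \<Rightarrow> bool" where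
  "ex1 P Q R \<longleftrightarrow> (P \<and> \<not>Q \<and> \<not>R) \<or> (\<not>P \<and> Q \<and> \<not>R) \<or> (\<not>P \<and> \<not>Q \<and> R)"

lemma card3:
  assumes "a \<noteq> b" "a \<noteq> c" "b \<noteq> c"
  shows "card {e \<in> {a,b,c}. P e} = 1 \<longleftrightarrow> ex1 (P a) (P b) (P c)"
proof -
  have eq: "{e \<in> {a,b,c}. P e} = (if P a then {a} else {}) \<union> (if P b then {b} else {}) \<union> (if P c then {c} else {})"
    by auto
  show ?thesis using assms unfolding ex1_def eq
    by (cases "P a"; cases "P b"; cases "P c") (auto simp: card_insert_if)
qed

lemma lv_iff: "locally_valid n \<mu> \<longleftrightarrow> (\<forall>k. 1 \<le> k \<and> k < n \<longrightarrow>
   ex1 (\<mu> (3*k-1) \<noteq> \<mu> (3*(k-1))) (\<mu> (3*k) \<noteq> \<mu> (3*(k-1))) (\<mu> (3*k+1) \<noteq> \<mu> (3*(k-1))))"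
proof -
  have "card {e \<in> {3*k-1, 3*k, 3*k+1}. \<mu> e \<noteq> \<mu> (3*k-3)} = 1 \<longleftrightarrow>
     ex1 (\<mu> (3*k-1) \<noteq> \<mu> (3*(k-1))) (\<mu> (3*k) \<noteq> \<mu> (3*(k-1))) (\<mu> (3*k+1) \<noteq> \<mu> (3*(k-1)))"
    if "1 \<le> k" for k
  proof -
    have e: "3*k-3 = 3*(k-1)" by simp
    show ?thesis unfolding e by (rule card3) (use that in auto)
  qed
  moreover have "k \<in> {1..n-1} \<longleftrightarrow> 1 \<le> k \<and> k < n" for k by auto
  ultimately show ?thesis unfolding locally_valid_def by auto
qed

lemma sg_mul: "sg x * (if P then -1 else 1) \<noteq> sg x \<longleftrightarrow> P" by (simp add: sg_def)
lemma sg_mul2: "sg x * (if P then -1 else 1) = sg x * (if Q then -1 else 1) \<longleftrightarrow> (P \<longleftrightarrow> Q)" by (simp add: sg_def)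
lemma sg_neg: "- sg x = sg (x + 1)" by (simp add: sg_def)

lemma loc_valid:
  fixes a b k :: int
  assumes "\<bar>b - a\<bar> \<le> 1"
  shows "ex1 (tfl a b k) (sg (b + k) \<noteq> sg (a + k - 1)) (bfl a b k)"
proof -
  have "sg (b + k) \<noteq> sg (a + k - 1) \<longleftrightarrow> a = b" unfolding sg_eq using assms by presburger
  then show ?thesis unfolding ex1_def tfl_def bfl_def by auto
qed

lemma enc_vertex:
  assumes "lip n g"
  shows "enc n g \<in> ofg_vertices n"
proof -
  have mv: "mv_assignment n (enc n g)"
    unfolding mv_assignment_def using enc_range enc_out by auto
  have "ex1 (enc n g (3*k-1) \<noteq> enc n g (3*(k-1))) (enc n g (3*k) \<noteq> enc n g (3*(k-1))) (enc n g (3*k+1) \<noteq> enc n g (3*(k-1)))"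
    if k: "1 \<le> k" "k < n" for k
  proof -
    have l: "\<bar>g k - g (k-1)\<bar> \<le> 1" using assms k unfolding lip_def by auto
    have h0: "enc n g (3*(k-1)) = sg (g (k-1) + int k - 1)"
      using enc_h[of "k-1" n g] k by (simp add: of_nat_diff algebra_simps)
    show ?thesis
      unfolding h0 enc_t[OF k] enc_b[OF k] enc_h[OF k(2)] sg_mul
      using loc_valid[OF l] .
  qed
  then have "locally_valid n (enc n g)" unfolding lv_iff by blast
  then show ?thesis using mv unfolding ofg_vertices_def by blast
qed

definition stp :: "(nat \<Rightarrow> int) \<Rightarrow> nat \<Rightarrow> int \<Rightarrow> int" where
  "stp \<mu> k a = (if \<mu> (3*k) \<noteq> \<mu> (3*(k-1)) then 0
     else if (\<mu> (3*k-1) \<noteq> \<mu> (3*(k-1))) = odd (a + int k) then 1 else -1)"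

primrec lft :: "(nat \<Rightarrow> int) \<Rightarrow> nat \<Rightarrow> int" where
  "lft \<mu> 0 = (if \<mu> 0 = 1 then 0 else 1)"
| "lft \<mu> (Suc j) = lft \<mu> j + stp \<mu> (Suc j) (lft \<mu> j)"

lemma vert_range: "\<mu> \<in> ofg_vertices n \<Longrightarrow> e \<in> creases n \<Longrightarrow> \<mu> e = 1 \<or> \<mu> e = -1"
  unfolding ofg_vertices_def mv_assignment_def by auto

lemma vert_out: "\<mu> \<in> ofg_vertices n \<Longrightarrow> e \<notin> creases n \<Longrightarrow> \<mu> e = 0"
  unfolding ofg_vertices_def mv_assignment_def by auto

lemma vert_valid: "\<mu> \<in> ofg_vertices n \<Longrightarrow> 1 \<le> k \<Longrightarrow> k < n \<Longrightarrow>
   ex1 (\<mu> (3*k-1) \<noteq> \<mu> (3*(k-1))) (\<mu> (3*k) \<noteq> \<mu> (3*(k-1))) (\<mu> (3*k+1) \<noteq> \<mu> (3*(k-1)))"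
  unfolding ofg_vertices_def lv_iff by auto

lemma cr_h: "j < n \<Longrightarrow> 3*j \<in> creases n" using creases_iff[of n "3*j"] by auto
lemma cr_t: "1 \<le> k \<Longrightarrow> k < n \<Longrightarrow> 3*k-1 \<in> creases n" using creases_iff[of n "3*k-1"] by auto
lemma cr_b: "1 \<le> k \<Longrightarrow> k < n \<Longrightarrow> 3*k+1 \<in> creases n" using creases_iff[of n "3*k+1"] by auto

lemma lft_inv:
  assumes v: "\<mu> \<in> ofg_vertices n"
  shows "j < n \<Longrightarrow> \<mu> (3*j) = sg (lft \<mu> j + int j)"
proof (induction j)
  case 0
  have "\<mu> 0 = 1 \<or> \<mu> 0 = -1" using vert_range[OF v cr_h[OF 0]] by simp
  then show ?case by (auto simp: sg_def)
next
  case (Suc j)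
  let ?a = "lft \<mu> j"
  have IH: "\<mu> (3*j) = sg (?a + int j)" using Suc by simp
  have r: "\<mu> (3 * Suc j) = 1 \<or> \<mu> (3 * Suc j) = -1" using vert_range[OF v cr_h[OF Suc.prems]] .
  have r0: "\<mu> (3*j) = 1 \<or> \<mu> (3*j) = -1" using vert_range[OF v cr_h, of j] Suc.prems by simp
  show ?case
  proof (cases "\<mu> (3 * Suc j) \<noteq> \<mu> (3*j)")
    case True
    then have "stp \<mu> (Suc j) ?a = 0" unfolding stp_def by simp
    then have "lft \<mu> (Suc j) = ?a" by simp
    then show ?thesis using True IH r r0 by (auto simp: sg_def)
  next
    case False
    then have "stp \<mu> (Suc j) ?a = 1 \<or> stp \<mu> (Suc j) ?a = -1" unfolding stp_def by simp
    then have "lft \<mu> (Suc j) = ?a + 1 \<or> lft \<mu> (Suc j) = ?a - 1" by auto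
    then show ?thesis using False IH by (auto simp: sg_def)
  qed
qed

lemma lft_lip: "lip n (lft \<mu>)"
  unfolding lip_def
proof (intro allI impI)
  fix k assume k: "1 \<le> k \<and> k < n"
  then obtain j where j: "k = Suc j" by (cases k) auto
  show "\<bar>lft \<mu> k - lft \<mu> (k - 1)\<bar> \<le> 1" unfolding j by (simp add: stp_def)
qed

lemma loc_lift:
  fixes a k s :: int
  assumes "ex1 T R B" "s = (if R then 0 else if T = odd (a + k) then 1 else -1)"
  shows "(tfl a (a+s) k \<longleftrightarrow> T) \<and> (bfl a (a+s) k \<longleftrightarrow> B)"
  using assms unfolding ex1_def tfl_def bfl_def by (auto simp: min_def)

lemma pm_eq: "(x::int) \<in> {1,-1} \<Longrightarrow> L \<in> {1,-1} \<Longrightarrow> (x = L*(if P then -1 else 1)) \<longleftrightarrow> ((x \<noteq> L) \<longleftrightarrow> P)"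
  by auto

lemma lft_enc:
  assumes v: "\<mu> \<in> ofg_vertices n" and n: "n \<ge> 1"
  shows "enc n (lft \<mu>) = \<mu>"
proof
  fix e
  show "enc n (lft \<mu>) e = \<mu> e"
  proof (cases "e \<in> creases n")
    case False then show ?thesis using enc_out vert_out[OF v] by simp
  next
    case True
    from True creases_iff[OF n] consider (h) j where "j<n" "e = 3*j"
      | (tb) k where "1 \<le> k" "k < n" "e = 3*k-1 \<or> e = 3*k+1" by blast
    then show ?thesis
    proof cases
      case h then show ?thesis using lft_inv[OF v] by (simp add: enc_h)
    next
      case tb
      let ?a = "lft \<mu> (k-1)"
      let ?L = "\<mu> (3*(k-1))"
      have kk: "k = Suc (k-1)" using tb by simp
      have b: "lft \<mu> k = ?a + stp \<mu> k ?a" using tb(1) by (cases k) auto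
      have L: "?L = sg (?a + int k - 1)"
        using lft_inv[OF v, of "k-1"] tb by (simp add: of_nat_diff algebra_simps)
      have ex: "ex1 (\<mu> (3*k-1) \<noteq> ?L) (\<mu> (3*k) \<noteq> ?L) (\<mu> (3*k+1) \<noteq> ?L)"
        using vert_valid[OF v tb(1,2)] .
      have s: "stp \<mu> k ?a = (if \<mu> (3*k) \<noteq> ?L then 0 else if (\<mu> (3*k-1) \<noteq> ?L) = odd (?a + int k) then 1 else -1)"
        unfolding stp_def by simp
      have ll: "(tfl ?a (lft \<mu> k) (int k) \<longleftrightarrow> \<mu> (3*k-1) \<noteq> ?L) \<and> (bfl ?a (lft \<mu> k) (int k) \<longleftrightarrow> \<mu> (3*k+1) \<noteq> ?L)"
        unfolding b by (rule loc_lift[OF ex s])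
      have Lr: "?L \<in> {1,-1}" using L by (auto simp: sg_def)
      have tr: "\<mu> (3*k-1) \<in> {1,-1}" using vert_range[OF v cr_t[OF tb(1,2)]] by simp
      have br: "\<mu> (3*k+1) \<in> {1,-1}" using vert_range[OF v cr_b[OF tb(1,2)]] by simp
      have "enc n (lft \<mu>) (3*k-1) = \<mu> (3*k-1)"
        unfolding enc_t[OF tb(1,2)] L[symmetric] using pm_eq[OF tr Lr] ll by metis
      moreover have "enc n (lft \<mu>) (3*k+1) = \<mu> (3*k+1)"
        unfolding enc_b[OF tb(1,2)] L[symmetric] using pm_eq[OF br Lr] ll by metis
      ultimately show ?thesis using tb(3) by auto
    qed
  qed
qed

lemma vert_lift: "\<mu> \<in> ofg_vertices n \<Longrightarrow> n \<ge> 1 \<Longrightarrow> \<exists>g. lip n g \<and> enc n g = \<mu>"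
  using lft_lip lft_enc by blast

lemma par1: "odd (y - 1 + M) \<longleftrightarrow> \<not> odd (y + M)" "odd (y + 1 + M) \<longleftrightarrow> \<not> odd (y + M)" for y M :: int
  by presburger+

lemma flagsL:
  fixes x y s M :: int
  assumes "\<bar>y - x\<bar> \<le> 1" "\<bar>y + s - x\<bar> \<le> 1" "s = 1 \<or> s = -1"
  shows "(tfl x (y+s) M \<longleftrightarrow> (tfl x y M \<noteq> odd (min y (y+s) + M))) \<and>
         (bfl x (y+s) M \<longleftrightarrow> (bfl x y M \<longleftrightarrow> odd (min y (y+s) + M)))"
proof -
  have "x = y - 1 \<or> x = y \<or> x = y + 1" using assms(1) by auto
  then show ?thesis using assms(2,3) unfolding tfl_def bfl_def
    by (elim disjE) (auto simp: min_def par1)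
qed

lemma flagsR:
  fixes z y s M :: int
  assumes "\<bar>z - y\<bar> \<le> 1" "\<bar>z - (y + s)\<bar> \<le> 1" "s = 1 \<or> s = -1"
  shows "(tfl (y+s) z (M+1) \<longleftrightarrow> (tfl y z (M+1) \<longleftrightarrow> odd (min y (y+s) + M))) \<and>
     (bfl (y+s) z (M+1) \<longleftrightarrow> (bfl y z (M+1) \<noteq> odd (min y (y+s) + M)))"
proof -
  have "z = y - 1 \<or> z = y \<or> z = y + 1" using assms(1) by auto
  then show ?thesis using assms(2,3) unfolding tfl_def bfl_def
    by (elim disjE) (auto simp: min_def par1)
qed

lemma border_iff:
  assumes "i = 1 \<or> i = 2"
  shows "e \<in> border n (i, Suc m) \<longleftrightarrow> e = 3*m \<or> (1 \<le> m \<and> e = (if i = 1 then 3*m-1 else 3*m+1))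
           \<or> (Suc m < n \<and> e = (if i = 1 then 3*m+2 else 3*m+4))"
  using assms unfolding border_def by (auto split: if_splits)

lemma ff_apply: "face_flip n \<mu> f e = (if e \<in> border n f then - \<mu> e else \<mu> e)"
  by (simp add: face_flip_def)

lemma sgflip: "(if I then - (S * (if P then -1 else 1)) else S * (if P then -1 else 1)) = S * (if Q then -1 else 1)"
  if "Q \<longleftrightarrow> (P \<noteq> I)" for S :: int
  using that by auto

lemma sgflip2: "(if I then - (S * (if P then -1 else 1)) else S * (if P then -1 else 1)) = - S * (if Q then -1 else 1)"
  if "Q \<longleftrightarrow> (P \<longleftrightarrow> I)" for S :: int
  using that by auto

lemma lipD: "lip n g \<Longrightarrow> 1 \<le> k \<Longrightarrow> k < n \<Longrightarrow> \<bar>g k - g (k-1)\<bar> \<le> 1"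
  unfolding lip_def by auto

lemma eqM: "int m + 1 = 1 + int m" by simp

lemma bh: "i = 1 \<or> i = 2 \<Longrightarrow> 3*j \<in> border n (i, Suc m) \<longleftrightarrow> j = m"
proof -
  assume i: "i = 1 \<or> i = 2"
  have "3*j \<noteq> 3*m+1" "3*j \<noteq> 3*m+2" "3*j \<noteq> 3*m+4" "3*j+1 \<noteq> 3*m" by presburger+
  moreover have "1 \<le> m \<Longrightarrow> 3*j \<noteq> 3*m - 1" using \<open>3*j+1 \<noteq> 3*m\<close> by arith
  ultimately show ?thesis unfolding border_iff[OF i] by auto
qed

lemma bt: "i = 1 \<or> i = 2 \<Longrightarrow> 1 \<le> k \<Longrightarrow>
   3*k-1 \<in> border n (i, Suc m) \<longleftrightarrow> i = 1 \<and> (k = m \<or> (k = Suc m \<and> Suc m < n))"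
proof -
  assume i: "i = 1 \<or> i = 2" and k: "1 \<le> k"
  obtain k' where k': "k = Suc k'" using k by (cases k) auto
  have e: "3*k-1 = 3*k'+2" using k' by simp
  have "3*k'+2 \<noteq> 3*m" "3*k'+2 \<noteq> 3*m+1" "3*k'+2 \<noteq> 3*m+4" by presburger+
  moreover have "1 \<le> m \<Longrightarrow> 3*k'+2 = 3*m - 1 \<longleftrightarrow> k = m" using k' by arith
  moreover have "3*k'+2 = 3*m+2 \<longleftrightarrow> k = Suc m" using k' by arith
  ultimately show ?thesis unfolding border_iff[OF i] e using k' i by auto
qed

lemma bb: "i = 1 \<or> i = 2 \<Longrightarrow> 1 \<le> k \<Longrightarrow>
   3*k+1 \<in> border n (i, Suc m) \<longleftrightarrow> i = 2 \<and> (k = m \<or> (k = Suc m \<and> Suc m < n))"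
proof -
  assume i: "i = 1 \<or> i = 2" and k: "1 \<le> k"
  have "3*k+1 \<noteq> 3*m" "3*k+1 \<noteq> 3*m+2" by presburger+
  moreover have "1 \<le> m \<Longrightarrow> 3*k+1 \<noteq> 3*m - 1" by arith
  moreover have "3*k+1 = 3*m+1 \<longleftrightarrow> k = m" by arith
  moreover have "3*k+1 = 3*m+4 \<longleftrightarrow> k = Suc m" by arith
  ultimately show ?thesis unfolding border_iff[OF i] using i k by auto
qed

lemma flip_fwd:
  assumes lg: "lip n g" and m: "m < n" and s: "s = 1 \<or> s = -1" and lg': "lip n (g(m := g m + s))"
  defines "I \<equiv> odd (min (g m) (g m + s) + int m)"
  shows "face_flip n (enc n g) (if I then 1 else 2, Suc m) = enc n (g(m := g m + s))"
proof
  fix e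
  let ?g' = "g(m := g m + s)"
  let ?i = "if I then 1 else 2::nat"
  have n1: "n \<ge> 1" using m by simp
  have i12: "?i = 1 \<or> ?i = 2" by simp
  show "face_flip n (enc n g) (?i, Suc m) e = enc n ?g' e"
  proof (cases "e \<in> creases n")
    case False then show ?thesis by (simp add: ff_apply enc_out)
  next
    case True
    from True creases_iff[OF n1] consider (h) j where "j<n" "e = 3*j"
      | (t) k where "1 \<le> k" "k < n" "e = 3*k-1" | (b) k where "1 \<le> k" "k < n" "e = 3*k+1" by blast
    then show ?thesis
    proof cases
      case h
      show ?thesis
      proof (cases "j = m")
        case True
        then have "e \<in> border n (?i, Suc m)" using bh[OF i12] h by simp
        then show ?thesis using h True s by (auto simp: ff_apply enc_h sg_def)
      next
        case False
        have "e \<notin> border n (?i, Suc m)" using bh[OF i12] h False by simp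
        then show ?thesis using h False by (simp add: ff_apply enc_h)
      qed
    next
      case t
      have inb: "e \<in> border n (?i, Suc m) \<longleftrightarrow> I \<and> (k = m \<or> (k = Suc m \<and> Suc m < n))"
        using bt[OF i12 t(1)] t(3) by simp
      consider "k = m" | "k = Suc m" | "k \<noteq> m \<and> k \<noteq> Suc m" by blast
      then show ?thesis
      proof cases
        case 1
        have inb': "e \<in> border n (?i, Suc m) \<longleftrightarrow> I" using inb 1 by simp
        have km: "1 \<le> m" "m < n" using t 1 by auto
        have mm: "m - 1 \<noteq> m" using km by simp
        have l1: "\<bar>g m - g (m-1)\<bar> \<le> 1" using lipD[OF lg km] .
        have l2: "\<bar>g m + s - g (m-1)\<bar> \<le> 1" using lipD[OF lg' km] mm by simp
        have fl: "tfl (g (m-1)) (g m + s) (int m) \<longleftrightarrow> (tfl (g (m-1)) (g m) (int m) \<noteq> I)"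
          using flagsL[OF l1 l2 s] unfolding I_def by blast
        have e1: "enc n g e = sg (g (m-1) + int m - 1) * (if tfl (g (m-1)) (g m) (int m) then -1 else 1)"
          unfolding t(3) 1 by (rule enc_t[OF km])
        have e2: "enc n ?g' e = sg (g (m-1) + int m - 1) * (if tfl (g (m-1)) (g m + s) (int m) then -1 else 1)"
          unfolding t(3) 1 enc_t[OF km] using mm by simp
        show ?thesis unfolding ff_apply inb' e1 e2 by (rule sgflip) (use fl in simp)
      next
        case 2
        have inb': "e \<in> border n (?i, Suc m) \<longleftrightarrow> I" using inb 2 t by simp
        have km: "1 \<le> Suc m" "Suc m < n" using t 2 by auto
        have l1: "\<bar>g (Suc m) - g m\<bar> \<le> 1" using lipD[OF lg km] by simp
        have l2: "\<bar>g (Suc m) - (g m + s)\<bar> \<le> 1" using lipD[OF lg' km] by simp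
        have fl: "tfl (g m + s) (g (Suc m)) (int m + 1) \<longleftrightarrow> (tfl (g m) (g (Suc m)) (int m + 1) \<longleftrightarrow> I)"
          using flagsR[where M="int m", OF l1 l2 s] unfolding I_def by blast
        have sgs: "sg (g m + s + int m) = - sg (g m + int m)"
          using s by (auto simp: sg_def)
        have e1: "enc n g e = sg (g m + int m) * (if tfl (g m) (g (Suc m)) (int m + 1) then -1 else 1)"
          unfolding t(3) 2 enc_t[OF km] by (simp add: eqM)
        have e2: "enc n ?g' e = sg (g m + s + int m) * (if tfl (g m + s) (g (Suc m)) (int m + 1) then -1 else 1)"
          unfolding t(3) 2 enc_t[OF km] by (simp add: eqM add.assoc)
        show ?thesis unfolding ff_apply inb' e1 e2 sgs by (rule sgflip2) (use fl in simp)
      next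
        case 3
        have "e \<notin> border n (?i, Suc m)" using inb 3 by simp
        moreover have "k - 1 \<noteq> m" using 3 t by auto
        moreover have "enc n ?g' e = enc n g e" unfolding t(3) enc_t[OF t(1,2)] using 3 \<open>k - 1 \<noteq> m\<close> by simp
        ultimately show ?thesis by (simp add: ff_apply)
      qed
    next
      case b
      have inb: "e \<in> border n (?i, Suc m) \<longleftrightarrow> \<not> I \<and> (k = m \<or> (k = Suc m \<and> Suc m < n))"
        using bb[OF i12 b(1)] b(3) by simp
      consider "k = m" | "k = Suc m" | "k \<noteq> m \<and> k \<noteq> Suc m" by blast
      then show ?thesis
      proof cases
        case 1
        have inb': "e \<in> border n (?i, Suc m) \<longleftrightarrow> \<not> I" using inb 1 by simp
        have km: "1 \<le> m" "m < n" using b 1 by auto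
        have mm: "m - 1 \<noteq> m" using km by simp
        have l1: "\<bar>g m - g (m-1)\<bar> \<le> 1" using lipD[OF lg km] .
        have l2: "\<bar>g m + s - g (m-1)\<bar> \<le> 1" using lipD[OF lg' km] mm by simp
        have fl: "bfl (g (m-1)) (g m + s) (int m) \<longleftrightarrow> (bfl (g (m-1)) (g m) (int m) \<noteq> (\<not> I))"
          using flagsL[OF l1 l2 s] unfolding I_def by blast
        have e1: "enc n g e = sg (g (m-1) + int m - 1) * (if bfl (g (m-1)) (g m) (int m) then -1 else 1)"
          unfolding b(3) 1 by (rule enc_b[OF km])
        have e2: "enc n ?g' e = sg (g (m-1) + int m - 1) * (if bfl (g (m-1)) (g m + s) (int m) then -1 else 1)"
          unfolding b(3) 1 enc_b[OF km] using mm by simp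
        show ?thesis unfolding ff_apply inb' e1 e2 by (rule sgflip) (use fl in simp)
      next
        case 2
        have inb': "e \<in> border n (?i, Suc m) \<longleftrightarrow> \<not> I" using inb 2 b by simp
        have km: "1 \<le> Suc m" "Suc m < n" using b 2 by auto
        have l1: "\<bar>g (Suc m) - g m\<bar> \<le> 1" using lipD[OF lg km] by simp
        have l2: "\<bar>g (Suc m) - (g m + s)\<bar> \<le> 1" using lipD[OF lg' km] by simp
        have fl: "bfl (g m + s) (g (Suc m)) (int m + 1) \<longleftrightarrow> (bfl (g m) (g (Suc m)) (int m + 1) \<longleftrightarrow> \<not> I)"
          using flagsR[where M="int m", OF l1 l2 s] unfolding I_def by blast
        have sgs: "sg (g m + s + int m) = - sg (g m + int m)"
          using s by (auto simp: sg_def)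
        have e1: "enc n g e = sg (g m + int m) * (if bfl (g m) (g (Suc m)) (int m + 1) then -1 else 1)"
          unfolding b(3) 2 enc_b[OF km] by (simp add: eqM)
        have e2: "enc n ?g' e = sg (g m + s + int m) * (if bfl (g m + s) (g (Suc m)) (int m + 1) then -1 else 1)"
          unfolding b(3) 2 enc_b[OF km] by (simp add: eqM add.assoc)
        show ?thesis unfolding ff_apply inb' e1 e2 sgs by (rule sgflip2) (use fl in simp)
      next
        case 3
        have "e \<notin> border n (?i, Suc m)" using inb 3 by simp
        moreover have "k - 1 \<noteq> m" using 3 b by auto
        moreover have "enc n ?g' e = enc n g e" unfolding b(3) enc_b[OF b(1,2)] using 3 \<open>k - 1 \<noteq> m\<close> by simp
        ultimately show ?thesis by (simp add: ff_apply)
      qed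
    qed
  qed
qed

lemma bool1: "ex1 t r b \<Longrightarrow> ex1 (t \<noteq> I) (\<not> r) (b \<noteq> (\<not> I)) \<Longrightarrow> (I \<longrightarrow> \<not> b) \<and> (\<not> I \<longrightarrow> \<not> t)"
  unfolding ex1_def by auto
lemma bool2: "ex1 t r b \<Longrightarrow> ex1 (t = I) (\<not> r) (b = (\<not> I)) \<Longrightarrow> (I \<longrightarrow> \<not> t) \<and> (\<not> I \<longrightarrow> \<not> b)"
  unfolding ex1_def by auto

lemma vneq1: "L = 1 \<or> L = -1 \<Longrightarrow> ((if I then - (L * (if P then -1 else 1)) else L * (if P then -1 else 1)) \<noteq> (L::int)) \<longleftrightarrow> (P \<noteq> I)"
  by auto
lemma vneq2: "L = 1 \<or> L = -1 \<Longrightarrow> ((if I then - (L * (if P then -1 else 1)) else L * (if P then -1 else 1)) \<noteq> - (L::int)) \<longleftrightarrow> (P = I)"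
  by auto
lemma vneq3: "L = 1 \<or> L = -1 \<Longrightarrow> R = 1 \<or> R = -1 \<Longrightarrow> (- R \<noteq> (L::int)) \<longleftrightarrow> \<not> (R \<noteq> L)"
  by auto
lemma vneq4: "L = 1 \<or> L = -1 \<Longrightarrow> R = 1 \<or> R = -1 \<Longrightarrow> (R \<noteq> - (L::int)) \<longleftrightarrow> \<not> (R \<noteq> L)"
  by auto

lemma sg_pm': "sg x = 1 \<or> sg x = -1" by (simp add: sg_def)

lemma stepL:
  fixes x y s M :: int
  assumes "\<bar>y - x\<bar> \<le> 1" "s = (if odd (y + M) = I then 1 else -1)" "I \<longrightarrow> \<not> bfl x y M" "\<not> I \<longrightarrow> \<not> tfl x y M"
  shows "\<bar>y + s - x\<bar> \<le> 1"
proof -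
  have "x = y - 1 \<or> x = y \<or> x = y + 1" using assms(1) by auto
  then show ?thesis using assms(2-4) unfolding tfl_def bfl_def
    by (elim disjE) (auto simp: min_def par1 split: if_splits)
qed

lemma stepR:
  fixes z y s M :: int
  assumes "\<bar>z - y\<bar> \<le> 1" "s = (if odd (y + M) = I then 1 else -1)" "I \<longrightarrow> \<not> tfl y z (M+1)" "\<not> I \<longrightarrow> \<not> bfl y z (M+1)"
  shows "\<bar>z - (y + s)\<bar> \<le> 1"
proof -
  have "z = y - 1 \<or> z = y \<or> z = y + 1" using assms(1) by auto
  then show ?thesis using assms(2-4) unfolding tfl_def bfl_def
    by (elim disjE) (auto simp: min_def par1 split: if_splits)
qed

lemma flip_bwd:
  assumes lg: "lip n g" and m: "m < n" and i: "i = 1 \<or> i = 2"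
    and fl: "flippable n (enc n g) (i, Suc m)"
  shows "\<exists>s. (s = 1 \<or> s = -1) \<and> lip n (g(m := g m + s)) \<and>
             face_flip n (enc n g) (i, Suc m) = enc n (g(m := g m + s))"
proof -
  let ?I = "i = 1"
  let ?mu = "face_flip n (enc n g) (i, Suc m)"
  define s where "s = (if odd (g m + int m) = ?I then 1 else (-1::int))"
  have s1: "s = 1 \<or> s = -1" unfolding s_def by simp
  have lv: "locally_valid n ?mu" using fl unfolding flippable_def by simp
  have C1: "(?I \<longrightarrow> \<not> bfl (g (m-1)) (g m) (int m)) \<and> (\<not> ?I \<longrightarrow> \<not> tfl (g (m-1)) (g m) (int m))"
    if km: "1 \<le> m" for km
  proof -
    have km': "1 \<le> m" "m < n" using km m by auto
    let ?L = "sg (g (m-1) + int m - 1)"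
    have h0: "enc n g (3*(m-1)) = ?L"
      using enc_h[of "m-1" n g] km' by (simp add: of_nat_diff algebra_simps)
    have l1: "\<bar>g m - g (m-1)\<bar> \<le> 1" using lipD[OF lg km'] .
    have ex0: "ex1 (tfl (g (m-1)) (g m) (int m)) (sg (g m + int m) \<noteq> ?L) (bfl (g (m-1)) (g m) (int m))"
      using loc_valid[OF l1] by simp
    have ex: "ex1 (?mu (3*m-1) \<noteq> ?mu (3*(m-1))) (?mu (3*m) \<noteq> ?mu (3*(m-1))) (?mu (3*m+1) \<noteq> ?mu (3*(m-1)))"
      using lv km' unfolding lv_iff by blast
    have mm: "m - 1 \<noteq> m" using km by simp
    have v0: "?mu (3*(m-1)) = ?L" unfolding ff_apply using bh[OF i, of "m-1"] mm h0 by simp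
    have v1: "?mu (3*m-1) = (if ?I then - (?L * (if tfl (g (m-1)) (g m) (int m) then -1 else 1))
                  else ?L * (if tfl (g (m-1)) (g m) (int m) then -1 else 1))"
      unfolding ff_apply enc_t[OF km'] using bt[OF i km] by simp
    have v2: "?mu (3*m) = - sg (g m + int m)"
      unfolding ff_apply enc_h[OF m] using bh[OF i, of m] by simp
    have v3: "?mu (3*m+1) = (if \<not> ?I then - (?L * (if bfl (g (m-1)) (g m) (int m) then -1 else 1))
                  else ?L * (if bfl (g (m-1)) (g m) (int m) then -1 else 1))"
      unfolding ff_apply enc_b[OF km'] using bb[OF i km] i by auto
    have ex': "ex1 (tfl (g (m-1)) (g m) (int m) \<noteq> ?I) (\<not> (sg (g m + int m) \<noteq> ?L)) (bfl (g (m-1)) (g m) (int m) \<noteq> (\<not> ?I))"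
      using ex unfolding v0 v1 v2 v3 vneq1[OF sg_pm'] vneq3[OF sg_pm' sg_pm'] .
    show ?thesis using bool1[OF ex0 ex'] .
  qed
  have C2: "(?I \<longrightarrow> \<not> tfl (g m) (g (Suc m)) (int m + 1)) \<and> (\<not> ?I \<longrightarrow> \<not> bfl (g m) (g (Suc m)) (int m + 1))"
    if km: "Suc m < n" for km
  proof -
    have km': "1 \<le> Suc m" "Suc m < n" using km by auto
    let ?L = "sg (g m + int m)"
    have l1: "\<bar>g (Suc m) - g m\<bar> \<le> 1" using lipD[OF lg km'] by simp
    have ex0: "ex1 (tfl (g m) (g (Suc m)) (int m + 1)) (sg (g (Suc m) + (int m + 1)) \<noteq> ?L) (bfl (g m) (g (Suc m)) (int m + 1))"
      using loc_valid[OF l1, of "int m + 1"] by simp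
    have ex: "ex1 (?mu (3*Suc m-1) \<noteq> ?mu (3*(Suc m-1))) (?mu (3*Suc m) \<noteq> ?mu (3*(Suc m-1))) (?mu (3*Suc m+1) \<noteq> ?mu (3*(Suc m-1)))"
      using lv km' unfolding lv_iff by blast
    have v0: "?mu (3*(Suc m-1)) = - ?L" unfolding ff_apply using bh[OF i, of m] enc_h[OF m] by simp
    have v1: "?mu (3*Suc m-1) = (if ?I then - (?L * (if tfl (g m) (g (Suc m)) (int m + 1) then -1 else 1))
                  else ?L * (if tfl (g m) (g (Suc m)) (int m + 1) then -1 else 1))"
      unfolding ff_apply enc_t[OF km'] using bt[OF i km'(1), of n m] km by (simp add: eqM)
    have v2: "?mu (3*Suc m) = sg (g (Suc m) + (int m + 1))"
      unfolding ff_apply enc_h[OF km] using bh[OF i, of "Suc m"] by (simp add: eqM)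
    have v3: "?mu (3*Suc m+1) = (if \<not> ?I then - (?L * (if bfl (g m) (g (Suc m)) (int m + 1) then -1 else 1))
                  else ?L * (if bfl (g m) (g (Suc m)) (int m + 1) then -1 else 1))"
      unfolding ff_apply enc_b[OF km'] using bb[OF i km'(1), of n m] km i by (auto simp: eqM)
    have ex': "ex1 (tfl (g m) (g (Suc m)) (int m + 1) = ?I) (\<not> (sg (g (Suc m) + (int m + 1)) \<noteq> ?L)) (bfl (g m) (g (Suc m)) (int m + 1) = (\<not> ?I))"
      using ex unfolding v0 v1 v2 v3 vneq2[OF sg_pm'] vneq4[OF sg_pm' sg_pm'] .
    show ?thesis using bool2[OF ex0 ex'] .
  qed
  have lg': "lip n (g(m := g m + s))"
    unfolding lip_def
  proof (intro allI impI)
    fix k assume k: "1 \<le> k \<and> k < n"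
    consider "k = m" | "k = Suc m" | "k \<noteq> m \<and> k \<noteq> Suc m" by blast
    then show "\<bar>(g(m := g m + s)) k - (g(m := g m + s)) (k - 1)\<bar> \<le> 1"
    proof cases
      case 1
      then have mm: "m - 1 \<noteq> m" "1 \<le> m" using k by auto
      have "\<bar>g m + s - g (m-1)\<bar> \<le> 1"
        using stepL[OF lipD[OF lg mm(2) m] s_def] C1[OF mm(2)] by blast
      then show ?thesis using 1 mm by simp
    next
      case 2
      have "\<bar>g (Suc m) - (g m + s)\<bar> \<le> 1"
        using stepR[where M="int m", OF _ s_def] lipD[OF lg, of "Suc m"] C2 k 2 by simp
      then show ?thesis using 2 by simp
    next
      case 3
      then have "k - 1 \<noteq> m" using k by auto
      then show ?thesis using 3 lipD[OF lg] k by simp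
    qed
  qed
  have "face_flip n (enc n g) (if odd (min (g m) (g m + s) + int m) then 1 else 2, Suc m) = enc n (g(m := g m + s))"
    by (rule flip_fwd[OF lg m s1 lg'])
  moreover have "(if odd (min (g m) (g m + s) + int m) then 1 else 2) = i"
    using i unfolding s_def by (auto simp: min_def par1)
  ultimately show ?thesis using s1 lg' by auto
qed

lemma edge_fwd:
  assumes lg: "lip n g" and m: "m < n" and s: "s = 1 \<or> s = -1" and lg': "lip n (g(m := g m + s))"
  shows "(enc n g, enc n (g(m := g m + s))) \<in> ofg_edges n"
proof -
  let ?I = "odd (min (g m) (g m + s) + int m)"
  let ?f = "(if ?I then 1 else 2::nat, Suc m)"
  have ff: "face_flip n (enc n g) ?f = enc n (g(m := g m + s))" by (rule flip_fwd[OF lg m s lg'])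
  have f: "?f \<in> faces n" using m unfolding faces_def by auto
  have v: "enc n g \<in> ofg_vertices n" by (rule enc_vertex[OF lg])
  have v': "enc n (g(m := g m + s)) \<in> ofg_vertices n" by (rule enc_vertex[OF lg'])
  have lv: "locally_valid n (enc n g)" "locally_valid n (enc n (g(m := g m + s)))"
    using v v' unfolding ofg_vertices_def by blast+
  have fl: "flippable n (enc n g) ?f" unfolding flippable_def ff using lv by blast
  have "\<exists>f\<in>faces n. flippable n (enc n g) f \<and> enc n (g(m := g m + s)) = face_flip n (enc n g) f"
    using f fl ff by metis
  then show ?thesis unfolding ofg_edges_def using v by blast
qed

lemma edge_bwd:
  assumes e: "(\<mu>, \<nu>) \<in> ofg_edges n" and lg: "lip n g" and mu: "enc n g = \<mu>"
  shows "\<exists>m<n. \<exists>s. (s = 1 \<or> s = -1) \<and> lip n (g(m := g m + s)) \<and> enc n (g(m := g m + s)) = \<nu>"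
proof -
  have "\<mu> \<in> ofg_vertices n \<and> (\<exists>f\<in>faces n. flippable n \<mu> f \<and> \<nu> = face_flip n \<mu> f)"
    using e unfolding ofg_edges_def by simp
  then obtain f where f: "f \<in> faces n" "flippable n \<mu> f" "\<nu> = face_flip n \<mu> f" by blast
  obtain i j where ij: "f = (i, j)" by (cases f)
  have i: "i = 1 \<or> i = 2" and j: "1 \<le> j" "j \<le> n" using f(1) ij unfolding faces_def by auto
  obtain m where m: "j = Suc m" using j by (cases j) auto
  have mn: "m < n" using j m by simp
  have fl: "flippable n (enc n g) (i, Suc m)" using f(2) mu ij m by simp
  obtain s where s: "s = 1 \<or> s = -1" "lip n (g(m := g m + s))"
      "face_flip n (enc n g) (i, Suc m) = enc n (g(m := g m + s))"
    using flip_bwd[OF lg mn i fl] by blast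
  have "enc n (g(m := g m + s)) = \<nu>" using s(3) f(3) mu ij m by simp
  then show ?thesis using s(1,2) mn by blast
qed

lemma sum_upd:
  fixes n m :: nat and g h :: "nat \<Rightarrow> int" and v :: int
  assumes "m < n"
  shows "(\<Sum>j<n. \<bar>(g(m := v)) j - h j\<bar>) = (\<Sum>j<n. \<bar>g j - h j\<bar>) - \<bar>g m - h m\<bar> + \<bar>v - h m\<bar>"
proof -
  have fin: "finite {..<n}" by simp
  have mm: "m \<in> {..<n}" using assms by simp
  have "(\<Sum>j<n. \<bar>(g(m := v)) j - h j\<bar>) = \<bar>v - h m\<bar> + (\<Sum>j\<in>{..<n}-{m}. \<bar>(g(m := v)) j - h j\<bar>)"
    using sum.remove[OF fin mm, of "\<lambda>j. \<bar>(g(m := v)) j - h j\<bar>"] by simp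
  also have "(\<Sum>j\<in>{..<n}-{m}. \<bar>(g(m := v)) j - h j\<bar>) = (\<Sum>j\<in>{..<n}-{m}. \<bar>g j - h j\<bar>)"
    by (rule sum.cong) auto
  also have "\<dots> = (\<Sum>j<n. \<bar>g j - h j\<bar>) - \<bar>g m - h m\<bar>"
    using sum.remove[OF fin mm, of "\<lambda>j. \<bar>g j - h j\<bar>"] by linarith
  finally show ?thesis by simp
qed

lemma lip_adj: "lip n g \<Longrightarrow> Suc j < n \<Longrightarrow> \<bar>g (Suc j) - g j\<bar> \<le> 1"
  using lipD[of n g "Suc j"] by simp

lemma lip_neg: "lip n (\<lambda>j. - f j) \<longleftrightarrow> lip n f"
  unfolding lip_def by (simp add: abs_minus_commute)

lemma move_down:
  assumes lg: "lip n g" and lh: "lip n h" and ex: "\<exists>j<n. g j > h j"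
  shows "\<exists>m<n. g m > h m \<and> lip n (g(m := g m - 1))"
proof -
  define D where "D j = g j - h j" for j
  define M where "M = Max (D ` {..<n})"
  define S where "S = {j. j < n \<and> D j = M}"
  have n0: "{..<n} \<noteq> {}" using ex by auto
  have MD: "D j \<le> M" if "j < n" for j unfolding M_def using that by (intro Max_ge) auto
  have "M \<in> D ` {..<n}" unfolding M_def using n0 by (intro Max_in) auto
  then have Sne: "S \<noteq> {}" unfolding S_def by auto
  have Sfin: "finite S" unfolding S_def by simp
  have "Max (g ` S) \<in> g ` S" using Sfin Sne by (intro Max_in) auto
  then obtain m where mS: "m \<in> S" and mM: "g m = Max (g ` S)" by auto
  have mmax: "g j \<le> g m" if "j \<in> S" for j unfolding mM using Sfin that by simp
  have mn: "m < n" and Dm: "D m = M" using mS unfolding S_def by auto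
  obtain j0 where j0: "j0 < n" "g j0 > h j0" using ex by blast
  have Mpos: "M > 0" using MD[OF j0(1)] j0(2) unfolding D_def by simp
  have nb: "g j \<le> g m" if j: "j < n" "\<bar>g j - g m\<bar> \<le> 1" "\<bar>h j - h m\<bar> \<le> 1" for j
  proof (rule ccontr)
    assume "\<not> g j \<le> g m"
    then have gj: "g j = g m + 1" using j(2) by simp
    have "D j \<le> D m" using MD[OF j(1)] Dm by simp
    then have "h j \<ge> h m + 1" using gj unfolding D_def by simp
    then have "h j = h m + 1" using j(3) by simp
    then have "D j = M" using gj Dm unfolding D_def by simp
    then have "j \<in> S" using j(1) unfolding S_def by simp
    then show False using mmax gj by fastforce
  qed
  have "lip n (g(m := g m - 1))"
    unfolding lip_def
  proof (intro allI impI)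
    fix k assume k: "1 \<le> k \<and> k < n"
    consider "k = m" | "k = Suc m" | "k \<noteq> m \<and> k \<noteq> Suc m" by blast
    then show "\<bar>(g(m := g m - 1)) k - (g(m := g m - 1)) (k - 1)\<bar> \<le> 1"
    proof cases
      case 1
      then have mm: "m - 1 \<noteq> m" "m = Suc (m - 1)" using k by auto
      have a: "\<bar>g m - g (m-1)\<bar> \<le> 1" using lip_adj[OF lg, of "m-1"] mm mn by simp
      have b: "\<bar>h m - h (m-1)\<bar> \<le> 1" using lip_adj[OF lh, of "m-1"] mm mn by simp
      have "g (m-1) \<le> g m" using nb[of "m-1"] a b mn by (simp add: abs_minus_commute)
      then show ?thesis using 1 mm a by simp
    next
      case 2
      have a: "\<bar>g (Suc m) - g m\<bar> \<le> 1" using lip_adj[OF lg, of m] k 2 by simp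
      have b: "\<bar>h (Suc m) - h m\<bar> \<le> 1" using lip_adj[OF lh, of m] k 2 by simp
      have "g (Suc m) \<le> g m" using nb[of "Suc m"] a b k 2 by simp
      then show ?thesis using 2 a by simp
    next
      case 3
      then have "k - 1 \<noteq> m" using k by auto
      then show ?thesis using 3 lipD[OF lg] k by simp
    qed
  qed
  moreover have "g m > h m" using Dm Mpos unfolding D_def by simp
  ultimately show ?thesis using mn by blast
qed

lemma move:
  assumes lg: "lip n g" and lh: "lip n h" and ex: "\<exists>j<n. g j \<noteq> h j"
  shows "\<exists>m<n. \<exists>s. (s = 1 \<or> s = -1) \<and> lip n (g(m := g m + s)) \<and> \<bar>g m + s - h m\<bar> = \<bar>g m - h m\<bar> - 1"
proof (cases "\<exists>j<n. g j > h j")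
  case True
  from move_down[OF lg lh True] obtain m where m: "m < n" "g m > h m" "lip n (g(m := g m - 1))" by blast
  have l: "lip n (g(m := g m + -1))" using m(3) by simp
  have a: "\<bar>g m + -1 - h m\<bar> = \<bar>g m - h m\<bar> - 1" using m(2) by simp
  show ?thesis using m(1) l a by blast
next
  case False
  then have ex': "\<exists>j<n. (- g j) > (- h j)" using ex by force
  have lg': "lip n (\<lambda>j. - g j)" using lg lip_neg by blast
  have lh': "lip n (\<lambda>j. - h j)" using lh lip_neg by blast
  from move_down[OF lg' lh' ex'] obtain m where m: "m < n" "- g m > - h m" "lip n ((\<lambda>j. - g j)(m := - g m - 1))"
    by auto
  have eq: "(\<lambda>j. - g j)(m := - g m - 1) = (\<lambda>j. - (g(m := g m + 1)) j)" by auto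
  have "lip n (g(m := g m + 1))" using m(3) unfolding eq lip_neg .
  moreover have a: "\<bar>g m + 1 - h m\<bar> = \<bar>g m - h m\<bar> - 1" using m(2) by simp
  ultimately show ?thesis using m(1) by blast
qed

lemma path_lemma:
  assumes lh: "lip n h" and n1: "n \<ge> 1"
  shows "lip n g \<Longrightarrow> nat (\<Sum>j<n. \<bar>g j - h j\<bar>) = d \<Longrightarrow> (enc n g, enc n h) \<in> (ofg_edges n) ^^ d"
proof (induction d arbitrary: g)
  case 0
  have nn: "(\<Sum>j<n. \<bar>g j - h j\<bar>) \<ge> 0" by (rule sum_nonneg) simp
  have "(\<Sum>j<n. \<bar>g j - h j\<bar>) = 0" using 0(2) nn by linarith
  then have "\<forall>j\<in>{..<n}. \<bar>g j - h j\<bar> = 0" using sum_nonneg_eq_0_iff[of "{..<n}" "\<lambda>j. \<bar>g j - h j\<bar>"] by simp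
  then have "\<forall>j<n. g j = h j" by simp
  then have "enc n g = enc n h" using enc_cong n1 by blast
  then show ?case by simp
next
  case (Suc d)
  have ex: "\<exists>j<n. g j \<noteq> h j"
  proof (rule ccontr)
    assume "\<not> ?thesis"
    then have "(\<Sum>j<n. \<bar>g j - h j\<bar>) = 0" by simp
    then show False using Suc.prems(2) by simp
  qed
  from move[OF Suc.prems(1) lh ex] obtain m s where ms: "m < n" "s = 1 \<or> s = -1"
    "lip n (g(m := g m + s))" "\<bar>g m + s - h m\<bar> = \<bar>g m - h m\<bar> - 1" by blast
  have "(\<Sum>j<n. \<bar>(g(m := g m + s)) j - h j\<bar>) = (\<Sum>j<n. \<bar>g j - h j\<bar>) - 1"
    using sum_upd[OF ms(1), of g "g m + s" h] ms(4) by simp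
  then have "nat (\<Sum>j<n. \<bar>(g(m := g m + s)) j - h j\<bar>) = d" using Suc.prems(2) by linarith
  from Suc.IH[OF ms(3) this] have "(enc n (g(m := g m + s)), enc n h) \<in> ofg_edges n ^^ d" .
  moreover have "(enc n g, enc n (g(m := g m + s))) \<in> ofg_edges n" by (rule edge_fwd[OF Suc.prems(1) ms(1-3)])
  ultimately show ?case by (rule relpow_Suc_I2[rotated])
qed

lemma lift_path:
  assumes l0: "lip n g0"
  shows "(enc n g0, \<nu>) \<in> (ofg_edges n) ^^ k \<Longrightarrow> \<exists>g. lip n g \<and> enc n g = \<nu> \<and> (\<Sum>j<n. \<bar>g j - g0 j\<bar>) \<le> int k"
proof (induction k arbitrary: \<nu>)
  case 0
  then have "\<nu> = enc n g0" by simp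
  then show ?case using l0 by auto
next
  case (Suc k)
  from Suc.prems obtain \<mu> where a: "(enc n g0, \<mu>) \<in> ofg_edges n ^^ k" and b: "(\<mu>, \<nu>) \<in> ofg_edges n"
    by (auto simp: relpow.simps)
  from Suc.IH[OF a] obtain g where g: "lip n g" "enc n g = \<mu>" "(\<Sum>j<n. \<bar>g j - g0 j\<bar>) \<le> int k" by blast
  from edge_bwd[OF b g(1,2)] obtain m s where ms: "m < n" "s = 1 \<or> s = -1"
    "lip n (g(m := g m + s))" "enc n (g(m := g m + s)) = \<nu>" by blast
  have "(\<Sum>j<n. \<bar>(g(m := g m + s)) j - g0 j\<bar>) = (\<Sum>j<n. \<bar>g j - g0 j\<bar>) - \<bar>g m - g0 m\<bar> + \<bar>g m + s - g0 m\<bar>"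
    by (rule sum_upd[OF ms(1)])
  moreover have "\<bar>g m + s - g0 m\<bar> \<le> \<bar>g m - g0 m\<bar> + 1" using ms(2) by auto
  ultimately have "(\<Sum>j<n. \<bar>(g(m := g m + s)) j - g0 j\<bar>) \<le> int (Suc k)" using g(3) by simp
  then show ?case using ms(3,4) by blast
qed

lemma lower_sum:
  "(\<Sum>j<n. \<bar>2 * int j + 1 - 2 * c\<bar>) \<ge> int ((n*n+1) div 2)"
proof (induction n arbitrary: c rule: less_induct)
  case (less n)
  consider "n = 0" | "n = 1" | k where "n = Suc (Suc k)" by (metis One_nat_def not0_implies_Suc)
  then show ?case
  proof cases
    case 1 then show ?thesis by simp
  next
    case 2
    have "\<bar>1 - 2 * c\<bar> \<ge> 1" by presburger
    then show ?thesis using 2 by simp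
  next
    case 3
    have IH: "(\<Sum>j<k. \<bar>2 * int j + 1 - 2 * (c - 1)\<bar>) \<ge> int ((k*k+1) div 2)"
      using less.IH[of k "c - 1"] 3 by simp
    have split: "(\<Sum>j<Suc (Suc k). \<bar>2 * int j + 1 - 2 * c\<bar>) =
        \<bar>1 - 2*c\<bar> + (\<Sum>j<k. \<bar>2 * int j + 1 - 2 * (c - 1)\<bar>) + \<bar>2 * int k + 3 - 2*c\<bar>"
    proof -
      have "(\<Sum>j<Suc (Suc k). \<bar>2 * int j + 1 - 2 * c\<bar>) = (\<Sum>j<Suc k. \<bar>2 * int j + 1 - 2 * c\<bar>) + \<bar>2 * int (Suc k) + 1 - 2*c\<bar>"
        by (rule sum.lessThan_Suc)
      also have "(\<Sum>j<Suc k. \<bar>2 * int j + 1 - 2 * c\<bar>) = \<bar>1 - 2*c\<bar> + (\<Sum>j<k. \<bar>2 * int (Suc j) + 1 - 2 * c\<bar>)"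
        by (subst sum.lessThan_Suc_shift) simp
      also have "(\<Sum>j<k. \<bar>2 * int (Suc j) + 1 - 2 * c\<bar>) = (\<Sum>j<k. \<bar>2 * int j + 1 - 2 * (c - 1)\<bar>)"
        by (rule sum.cong) (auto simp: algebra_simps)
      finally show ?thesis by (simp add: algebra_simps)
    qed
    have ends: "\<bar>1 - 2*c\<bar> + \<bar>2 * int k + 3 - 2*c\<bar> \<ge> 2 * int k + 2" by linarith
    have nn: "(Suc (Suc k) * Suc (Suc k) + 1) div 2 = (k*k+1) div 2 + 2*k + 2"
    proof -
      have "Suc (Suc k) * Suc (Suc k) + 1 = (k*k+1) + 2*(2*k+2)" by (simp add: algebra_simps)
      then show ?thesis by simp
    qed
    show ?thesis unfolding 3 split nn using IH ends by simp
  qed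
qed

lemma nu0_lift:
  assumes lg: "lip n g" and eq: "enc n g = enc n (\<lambda>j. - int j - 1)" and n1: "n \<ge> 1"
  shows "odd (g 0) \<and> (\<forall>j<n. g j = g 0 - int j)"
proof -
  let ?g1 = "\<lambda>j::nat. - int j - 1"
  have n0: "0 < n" using n1 by simp
  have "enc n g (3*0) = enc n ?g1 (3*0)" using eq by simp
  then have "sg (g 0) = sg (-1)" unfolding enc_h[OF n0] by simp
  then have o: "odd (g 0)" unfolding sg_eq by simp
  have "j < n \<Longrightarrow> g j = g 0 - int j" for j
  proof (induction j)
    case 0 then show ?case by simp
  next
    case (Suc j)
    have k: "1 \<le> Suc j" "Suc j < n" using Suc.prems by auto
    have IH: "g j = g 0 - int j" using Suc by simp
    have "enc n g (3 * Suc j) = enc n ?g1 (3 * Suc j)" using eq by simp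
    then have "sg (g (Suc j) + int (Suc j)) = sg (-1)" unfolding enc_h[OF k(2)] by simp
    then have ok: "odd (g (Suc j) + int j + 1)" unfolding sg_eq by simp
    have l: "\<bar>g (Suc j) - g j\<bar> \<le> 1" using lip_adj[OF lg k(2)] .
    have "enc n g (3 * Suc j - 1) = enc n ?g1 (3 * Suc j - 1)" using eq by simp
    then have "sg (g j + int (Suc j) - 1) * (if tfl (g j) (g (Suc j)) (int (Suc j)) then -1 else 1)
        = sg (?g1 j + int (Suc j) - 1) * (if tfl (?g1 j) (?g1 (Suc j)) (int (Suc j)) then -1 else 1)"
      unfolding enc_t[OF k] by simp
    moreover have "sg (g j + int (Suc j) - 1) = sg (?g1 j + int (Suc j) - 1)"
      unfolding sg_eq using IH o by simp
    ultimately have "tfl (g j) (g (Suc j)) (int (Suc j)) \<longleftrightarrow> tfl (?g1 j) (?g1 (Suc j)) (int (Suc j))"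
      using sg_mul2 by metis
    moreover have "tfl (?g1 j) (?g1 (Suc j)) (int (Suc j))" unfolding tfl_def by (simp add: min_def)
    ultimately have t: "g (Suc j) \<noteq> g j \<and> odd (min (g j) (g (Suc j)) + int (Suc j))" unfolding tfl_def by simp
    have "g (Suc j) = g j - 1"
    proof (rule ccontr)
      assume "g (Suc j) \<noteq> g j - 1"
      then have "g (Suc j) = g j + 1" using t l by auto
      then show False using t ok by (simp add: min_def)
    qed
    then show ?case using IH by simp
  qed
  then show ?thesis using o by blast
qed

lemma half_even: "even (x::int) \<Longrightarrow> 2 * (x div 2) = x" by simp
lemma half_odd1: "odd (x::int) \<Longrightarrow> 2 * ((x + 1) div 2) = x + 1" by presburger
lemma half_odd2: "odd (x::int) \<Longrightarrow> 2 * ((x - 1) div 2) = x - 1" by presburger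

lemma base2: "\<bar>b - a\<bar> \<le> 2 \<Longrightarrow> \<exists>c. \<bar>a - 2*c\<bar> + \<bar>b - 2*c\<bar> \<le> (2::int)"
proof -
  assume ab: "\<bar>b - a\<bar> \<le> 2"
  consider "even a" | "odd a" "b \<ge> a" | "odd a" "b < a" by linarith
  then show ?thesis
  proof cases
    case 1
    show ?thesis by (rule exI[of _ "a div 2"]) (use half_even[OF 1] ab in arith)
  next
    case 2
    show ?thesis by (rule exI[of _ "(a+1) div 2"]) (use half_odd1[OF 2(1)] ab 2 in arith)
  next
    case 3
    show ?thesis by (rule exI[of _ "(a-1) div 2"]) (use half_odd2[OF 3(1)] ab 3 in arith)
  qed
qed

lemma base3: "\<bar>b - a\<bar> \<le> 2 \<Longrightarrow> \<bar>e - b\<bar> \<le> 2 \<Longrightarrow>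
   \<exists>c. \<bar>a - 2*c\<bar> + \<bar>b - 2*c\<bar> + \<bar>e - 2*c\<bar> \<le> (5::int) \<and> \<bar>a - 2*c\<bar> + \<bar>e - 2*c\<bar> \<le> 4"
proof -
  assume ab: "\<bar>b - a\<bar> \<le> 2" and eb: "\<bar>e - b\<bar> \<le> 2"
  consider "even b" | "odd b" "a + e \<ge> 2*b" | "odd b" "a + e < 2*b" by linarith
  then show ?thesis
  proof cases
    case 1
    show ?thesis by (rule exI[of _ "b div 2"]) (use half_even[OF 1] ab eb in arith)
  next
    case 2
    show ?thesis by (rule exI[of _ "(b+1) div 2"]) (use half_odd1[OF 2(1)] ab eb 2 in arith)
  next
    case 3
    show ?thesis by (rule exI[of _ "(b-1) div 2"]) (use half_odd2[OF 3(1)] ab eb 3 in arith)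
  qed
qed

lemma sum_split2: "(\<Sum>j<Suc (Suc k). f j) = f 0 + (\<Sum>j<k. f (Suc j)) + (f (Suc k) :: int)"
proof -
  have "(\<Sum>j<Suc (Suc k). f j) = (\<Sum>j<Suc k. f j) + f (Suc k)" by (rule sum.lessThan_Suc)
  also have "(\<Sum>j<Suc k. f j) = f 0 + (\<Sum>j<k. f (Suc j))" by (rule sum.lessThan_Suc_shift)
  finally show ?thesis .
qed

lemma upper_c:
  "2 \<le> n \<Longrightarrow> (\<forall>j. Suc j < n \<longrightarrow> \<bar>d (Suc j) - d j\<bar> \<le> 2) \<Longrightarrow>
   \<exists>c. (\<Sum>j<n. \<bar>d j - 2*c\<bar>) \<le> int ((n*n+1) div 2) \<and> \<bar>d 0 - 2*c\<bar> + \<bar>d (n-1) - 2*c\<bar> \<le> 2 * int n - 2"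
proof (induction n arbitrary: d rule: less_induct)
  case (less n)
  have st: "\<bar>d (Suc j) - d j\<bar> \<le> 2" if "Suc j < n" for j using less.prems(2) that by blast
  have nk: "n = Suc (Suc (n-2))" using less.prems(1) by simp
  consider "n - 2 = 0" | "n - 2 = 1" | "n - 2 \<ge> 2" by linarith
  then show ?case
  proof cases
    case 1
    then have n2: "n = 2" using nk by simp
    have "\<bar>d 1 - d 0\<bar> \<le> 2" using st[of 0] n2 by simp
    from base2[OF this] obtain c where c: "\<bar>d 0 - 2*c\<bar> + \<bar>d 1 - 2*c\<bar> \<le> 2" by blast
    have s: "(\<Sum>j<n. \<bar>d j - 2*c\<bar>) = \<bar>d 0 - 2*c\<bar> + \<bar>d 1 - 2*c\<bar>" unfolding n2 by (simp add: numeral_2_eq_2)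
    have "(\<Sum>j<n. \<bar>d j - 2*c\<bar>) \<le> int ((n*n+1) div 2)" using c s n2 by simp
    moreover have "\<bar>d 0 - 2*c\<bar> + \<bar>d (n-1) - 2*c\<bar> \<le> 2 * int n - 2" using c n2 by simp
    ultimately show ?thesis by blast
  next
    case 2
    then have n3: "n = 3" using nk by simp
    have a: "\<bar>d 1 - d 0\<bar> \<le> 2" using st[of 0] n3 by simp
    have b: "\<bar>d 2 - d 1\<bar> \<le> 2" using st[of 1] n3 by (simp add: numeral_2_eq_2)
    from base3[OF a b] obtain c where c: "\<bar>d 0 - 2*c\<bar> + \<bar>d 1 - 2*c\<bar> + \<bar>d 2 - 2*c\<bar> \<le> 5"
      "\<bar>d 0 - 2*c\<bar> + \<bar>d 2 - 2*c\<bar> \<le> 4" by blast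
    have s: "(\<Sum>j<n. \<bar>d j - 2*c\<bar>) = \<bar>d 0 - 2*c\<bar> + \<bar>d 1 - 2*c\<bar> + \<bar>d 2 - 2*c\<bar>"
      unfolding n3 by (simp add: numeral_3_eq_3 numeral_2_eq_2)
    have "(\<Sum>j<n. \<bar>d j - 2*c\<bar>) \<le> int ((n*n+1) div 2)" using c s n3 by simp
    moreover have "\<bar>d 0 - 2*c\<bar> + \<bar>d (n-1) - 2*c\<bar> \<le> 2 * int n - 2" using c n3 by simp
    ultimately show ?thesis by blast
  next
    case 3
    define k where "k = n - 2"
    have nk': "n = Suc (Suc k)" "k \<ge> 2" using nk 3 unfolding k_def by auto
    let ?d = "\<lambda>j. d (Suc j)"
    have st': "\<forall>j. Suc j < k \<longrightarrow> \<bar>?d (Suc j) - ?d j\<bar> \<le> 2" using st nk' by simp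
    have kn: "k < n" using nk' by simp
    from less.IH[OF kn nk'(2) st'] obtain c where
      c: "(\<Sum>j<k. \<bar>d (Suc j) - 2*c\<bar>) \<le> int ((k*k+1) div 2)"
         "\<bar>d (Suc 0) - 2*c\<bar> + \<bar>d (Suc (k-1)) - 2*c\<bar> \<le> 2 * int k - 2" by blast
    have kk: "Suc (k-1) = k" using nk' by simp
    have e0: "\<bar>d 1 - d 0\<bar> \<le> 2" using st[of 0] nk' by simp
    have e1: "\<bar>d (Suc k) - d k\<bar> \<le> 2" using st[of k] nk' by simp
    have nn: "(n * n + 1) div 2 = (k*k+1) div 2 + 2*k + 2"
    proof -
      have "n * n + 1 = (k*k+1) + 2*(2*k+2)" unfolding nk' by (simp add: algebra_simps)
      then show ?thesis by simp
    qed
    have s: "(\<Sum>j<n. \<bar>d j - 2*c\<bar>) = \<bar>d 0 - 2*c\<bar> + (\<Sum>j<k. \<bar>d (Suc j) - 2*c\<bar>) + \<bar>d (Suc k) - 2*c\<bar>"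
      unfolding nk'(1) by (rule sum_split2)
    have c2: "\<bar>d 1 - 2*c\<bar> + \<bar>d k - 2*c\<bar> \<le> 2 * int k - 2" using c(2) kk by simp
    have a0: "\<bar>d 0 - 2*c\<bar> \<le> \<bar>d 1 - 2*c\<bar> + 2" using e0 by linarith
    have a1: "\<bar>d (Suc k) - 2*c\<bar> \<le> \<bar>d k - 2*c\<bar> + 2" using e1 by linarith
    have ni: "int ((n * n + 1) div 2) = int ((k*k+1) div 2) + 2 * int k + 2" unfolding nn by simp
    have "(\<Sum>j<n. \<bar>d j - 2*c\<bar>) \<le> int ((n*n+1) div 2)" unfolding s ni using c(1) c2 a0 a1 by linarith
    moreover have "\<bar>d 0 - 2*c\<bar> + \<bar>d (n-1) - 2*c\<bar> \<le> 2 * int n - 2"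
      using c2 a0 a1 nk' by simp
    ultimately show ?thesis by blast
  qed
qed

lemma ceil_eq: "nat \<lceil>(real n)^2 / 2\<rceil> = (n*n+1) div 2"
proof -
  define q where "q = (n*n+1) div 2"
  have "n*n = 2*q \<or> n*n + 1 = 2*q" unfolding q_def by presburger
  then have "real n ^ 2 = 2 * real q \<or> real n ^ 2 + 1 = 2 * real q"
    by (metis (mono_tags) of_nat_add of_nat_mult of_nat_numeral of_nat_1 power2_eq_square)
  then have "\<lceil>(real n)^2 / 2\<rceil> = int q"
  proof
    assume "real n ^ 2 = 2 * real q"
    then have "real n ^ 2 / 2 = real q" by simp
    then show ?thesis by simp
  next
    assume h: "real n ^ 2 + 1 = 2 * real q"
    show ?thesis
    proof (rule ceiling_unique)
      show "real_of_int (int q) - 1 < real n ^ 2 / 2" using h by simp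
      show "real n ^ 2 / 2 \<le> real_of_int (int q)" using h by simp
    qed
  qed
  then show ?thesis unfolding q_def by simp
qed

theorem corollary5p9:
  fixes n :: nat
  assumes "n \<ge> 2"
  shows "ofg_diameter n = enat (nat \<lceil>(real n)^2 / 2\<rceil>)"
proof -
  define N where "N = (n*n+1) div 2"
  have n1: "n \<ge> 1" using assms by simp
  define g0 where "g0 = (\<lambda>j::nat. int j)"
  define g1 where "g1 = (\<lambda>j::nat. - int j - 1)"
  have lg0: "lip n g0" unfolding lip_def g0_def by auto
  have lg1: "lip n g1" unfolding lip_def g1_def by auto
  have v0: "enc n g0 \<in> ofg_vertices n" by (rule enc_vertex[OF lg0])
  have v1: "enc n g1 \<in> ofg_vertices n" by (rule enc_vertex[OF lg1])
  have up: "ofg_dist n \<mu> \<nu> \<le> enat N" if mu: "\<mu> \<in> ofg_vertices n" and nu: "\<nu> \<in> ofg_vertices n" for \<mu> \<nu>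
  proof -
    obtain g where g: "lip n g" "enc n g = \<mu>" using vert_lift[OF mu n1] by blast
    obtain h where h: "lip n h" "enc n h = \<nu>" using vert_lift[OF nu n1] by blast
    define d where "d j = g j - h j" for j
    have st: "\<forall>j. Suc j < n \<longrightarrow> \<bar>d (Suc j) - d j\<bar> \<le> 2"
    proof (intro allI impI)
      fix j assume j: "Suc j < n"
      have "\<bar>g (Suc j) - g j\<bar> \<le> 1" "\<bar>h (Suc j) - h j\<bar> \<le> 1" using lip_adj[OF g(1) j] lip_adj[OF h(1) j] by auto
      then show "\<bar>d (Suc j) - d j\<bar> \<le> 2" unfolding d_def by linarith
    qed
    obtain c where c: "(\<Sum>j<n. \<bar>d j - 2*c\<bar>) \<le> int N" using upper_c[OF assms st] unfolding N_def by blast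
    define h' where "h' j = h j + 2*c" for j
    have lh': "lip n h'" using h(1) unfolding lip_def h'_def by simp
    have eh': "enc n h' = \<nu>" unfolding h'_def using enc_shift h(2) by simp
    have eqs: "(\<Sum>j<n. \<bar>g j - h' j\<bar>) = (\<Sum>j<n. \<bar>d j - 2*c\<bar>)"
      unfolding d_def h'_def by (rule sum.cong) (simp, linarith)
    have p: "(\<mu>, \<nu>) \<in> (ofg_edges n) ^^ (nat (\<Sum>j<n. \<bar>g j - h' j\<bar>))"
      using path_lemma[OF lh' n1 g(1) refl] g(2) eh' by simp
    have "ofg_dist n \<mu> \<nu> \<le> enat (nat (\<Sum>j<n. \<bar>g j - h' j\<bar>))"
      unfolding ofg_dist_def by (rule INF_lower) (use p in blast)
    also have "\<dots> \<le> enat N" using c eqs by simp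
    finally show ?thesis .
  qed
  have low: "enat N \<le> ofg_dist n (enc n g0) (enc n g1)"
    unfolding ofg_dist_def
  proof (rule INF_greatest)
    fix k assume "k \<in> {k. (enc n g0, enc n g1) \<in> ofg_edges n ^^ k}"
    then have k: "(enc n g0, enc n g1) \<in> ofg_edges n ^^ k" by simp
    from lift_path[OF lg0 k] obtain g where g: "lip n g" "enc n g = enc n g1"
      "(\<Sum>j<n. \<bar>g j - g0 j\<bar>) \<le> int k" by blast
    have g2: "enc n g = enc n (\<lambda>j. - int j - 1)" using g(2) unfolding g1_def .
    have gs: "odd (g 0) \<and> (\<forall>j<n. g j = g 0 - int j)" by (rule nu0_lift[OF g(1) g2 n1])
    then obtain b where b: "g 0 = 2*b + 1" by (meson oddE)
    define c where "c = b + 1"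
    have "(\<Sum>j<n. \<bar>g j - g0 j\<bar>) = (\<Sum>j<n. \<bar>2 * int j + 1 - 2 * c\<bar>)"
    proof (rule sum.cong)
      fix j assume "j \<in> {..<n}"
      then have "g j = 2*b + 1 - int j" using gs b by simp
      then show "\<bar>g j - g0 j\<bar> = \<bar>2 * int j + 1 - 2 * c\<bar>" unfolding g0_def c_def by arith
    qed simp
    moreover have "(\<Sum>j<n. \<bar>2 * int j + 1 - 2 * c\<bar>) \<ge> int N" unfolding N_def by (rule lower_sum)
    ultimately have "int N \<le> int k" using g(3) by linarith
    then show "enat N \<le> enat k" by simp
  qed
  have "ofg_diameter n = enat N"
  proof (rule antisym)
    show "ofg_diameter n \<le> enat N"
      unfolding ofg_diameter_def by (intro SUP_least) (rule up)
    have "enat N \<le> (SUP \<nu>\<in>ofg_vertices n. ofg_dist n (enc n g0) \<nu>)"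
      using order_trans[OF low SUP_upper[OF v1, of "ofg_dist n (enc n g0)"]] .
    then show "enat N \<le> ofg_diameter n"
      unfolding ofg_diameter_def
      using order_trans[OF _ SUP_upper[OF v0, of "\<lambda>\<mu>. SUP \<nu>\<in>ofg_vertices n. ofg_dist n \<mu> \<nu>"]] by blast
  qed
  then show ?thesis unfolding N_def ceil_eq .
qed

end
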